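(* For every integer $n\ge 1$, $\mathbf{w}(\omega^{\times n})=\omega^{n-1}$.
   Context: $\omega^{\times n}=\omega\times\dots\times\omega$ ($n$ factors) is the cartesian product of $n$ copies of the ordinal $\omega$ with the componentwise order. The width $\mathbf{w}(A)$ of a wqo $A$ is the rank of the forest of nonempty finite sequences of pairwise incomparable elements of $A$ ordered by initial segment, i.e. $\mathbf{w}(A)=\sup_s(r(s)+1)$ with $r(s)=\sup\{r(t)+1: t$ child of $s\}$. *)

theory Defs
  imports Main
begin

text \<open>Ordinals are represented by (reflexive) well-order relations in the sense of
Main's BNF_Wellorder_Relation (Well_order), up to isomorphism.\<close>

definition omega_prod_carrier :: "nat \<Rightarrow> nat list set" where
  "omega_prod_carrier n = {xs. length xs = n}"

definition omega_prod_le :: "nat list \<Rightarrow> nat list \<Rightarrow> bool" where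
  "omega_prod_le xs ys = list_all2 (\<le>) xs ys"

definition incomparable :: "('a \<Rightarrow> 'a \<Rightarrow> bool) \<Rightarrow> 'a \<Rightarrow> 'a \<Rightarrow> bool" where
  "incomparable le x y \<longleftrightarrow> \<not> le x y \<and> \<not> le y x"

text \<open>Nodes of the forest: nonempty finite sequences of pairwise incomparable elements.
The children of s are the one-element extensions s @ [a].\<close>
definition antichain_seqs :: "'a set \<Rightarrow> ('a \<Rightarrow> 'a \<Rightarrow> bool) \<Rightarrow> 'a list set" where
  "antichain_seqs A le = {s. s \<noteq> [] \<and> set s \<subseteq> A \<and>
      (\<forall>i j. i < j \<and> j < length s \<longrightarrow> incomparable le (s ! i) (s ! j))}"

text \<open>is_width A le alpha: the well-order \<alpha> is (isomorphic to) the width of (A, le), i.e.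
there is a rank function r into \<alpha> with r(s) = sup{r(t)+1 : t child of s}
(the least element of \<alpha> strictly above all r(t)), and \<alpha> = sup_s (r(s)+1),
i.e. the field of \<alpha> is the union of the closed initial segments [0, r(s)].\<close>
definition is_width :: "'a set \<Rightarrow> ('a \<Rightarrow> 'a \<Rightarrow> bool) \<Rightarrow> 'b rel \<Rightarrow> bool" where
  "is_width A le \<alpha> \<longleftrightarrow> Well_order \<alpha> \<and>
    (\<exists>r. (\<forall>s\<in>antichain_seqs A le.
            r s \<in> Field \<alpha>
          \<and> (\<forall>a. s @ [a] \<in> antichain_seqs A le \<longrightarrow>
                 (r (s @ [a]), r s) \<in> \<alpha> \<and> r (s @ [a]) \<noteq> r s)
          \<and> (\<forall>\<beta>\<in>Field \<alpha>. (\<forall>a. s @ [a] \<in> antichain_seqs A le \<longrightarrow>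
                 (r (s @ [a]), \<beta>) \<in> \<alpha> \<and> r (s @ [a]) \<noteq> \<beta>) \<longrightarrow> (r s, \<beta>) \<in> \<alpha>))
      \<and> Field \<alpha> = {\<beta>. \<exists>s\<in>antichain_seqs A le. (\<beta>, r s) \<in> \<alpha>})"

definition omega_pow :: "nat \<Rightarrow> nat list rel" where
  "omega_pow k = {(xs, ys). length xs = k \<and> length ys = k \<and>
      (xs = ys \<or> (xs, ys) \<in> lexord {(a, b). a < b})}"

end

theory Submission
  imports Defs
begin


lemma Field_omega_pow: "Field (omega_pow k) = {xs. length xs = k}"
  unfolding omega_pow_def Field_def by auto

lemma lexord_less_trans: "trans {(a::nat, b). a < b}"
  by (auto simp: trans_def)

lemma Well_order_omega_pow: "Well_order (omega_pow k)"
proof -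
  let ?r = "{(a::nat, b). a < b}"
  have tr: "trans (omega_pow k)"
    unfolding omega_pow_def trans_def
    using lexord_trans[OF _ _ lexord_less_trans] by blast
  have asy: "asym (lexord ?r)" by (rule lexord_asym) (auto intro: asymI)
  have anti: "antisym (omega_pow k)"
    unfolding omega_pow_def antisym_def using asy by (auto dest: asymD)
  have refl: "refl_on (Field (omega_pow k)) (omega_pow k)"
    unfolding Field_omega_pow refl_on_def by (auto simp: omega_pow_def)
  have tot: "total_on (Field (omega_pow k)) (omega_pow k)"
    unfolding Field_omega_pow total_on_def
  proof (intro ballI impI)
    fix x y :: "nat list" assume "x \<in> {xs. length xs = k}" "y \<in> {xs. length xs = k}" "x \<noteq> y"
    moreover have "(x, y) \<in> lexord ?r \<or> x = y \<or> (y, x) \<in> lexord ?r"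
      by (rule lexord_linear) auto
    ultimately show "(x, y) \<in> omega_pow k \<or> (y, x) \<in> omega_pow k"
      by (auto simp: omega_pow_def)
  qed
  have "omega_pow k - Id \<subseteq> lex ?r"
    unfolding omega_pow_def by (auto simp: lexord_lex)
  then have wf: "wf (omega_pow k - Id)"
    using wf_subset wf_lex wf_less by blast
  show ?thesis
    unfolding well_order_on_def linear_order_on_def partial_order_on_def preorder_on_def
    using tr anti refl tot wf by (auto simp: Field_def)
qed



lemma wo_facts:
  assumes "Well_order \<alpha>"
  shows "trans \<alpha>" "antisym \<alpha>" "\<And>x. x \<in> Field \<alpha> \<Longrightarrow> (x,x) \<in> \<alpha>"
    "\<And>x y. x \<in> Field \<alpha> \<Longrightarrow> y \<in> Field \<alpha> \<Longrightarrow> (x,y) \<in> \<alpha> \<or> (y,x) \<in> \<alpha>"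
    "wf (\<alpha> - Id)"
  using assms unfolding well_order_on_def linear_order_on_def partial_order_on_def preorder_on_def
    refl_on_def total_on_def by (blast, blast, blast, metis, blast)

lemma wo_min:
  assumes wo: "Well_order \<alpha>" and B: "B \<subseteq> Field \<alpha>" "x \<in> B"
  shows "\<exists>\<beta>\<in>B. \<forall>\<gamma>\<in>B. (\<beta>,\<gamma>) \<in> \<alpha>"
proof -
  obtain \<beta> where b: "\<beta> \<in> B" "\<And>\<gamma>. (\<gamma>,\<beta>) \<in> \<alpha> - Id \<Longrightarrow> \<gamma> \<notin> B"
    using wfE_min[OF wo_facts(5)[OF wo] B(2)] by blast
  have "\<forall>\<gamma>\<in>B. (\<beta>,\<gamma>) \<in> \<alpha>"
  proof
    fix \<gamma> assume g: "\<gamma> \<in> B"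
    show "(\<beta>,\<gamma>) \<in> \<alpha>"
    proof (cases "\<gamma> = \<beta>")
      case True then show ?thesis using wo_facts(3)[OF wo] B g by auto
    next
      case False then show ?thesis using wo_facts(4)[OF wo, of \<beta> \<gamma>] b g B by auto
    qed
  qed
  then show ?thesis using b by blast
qed

definition childR :: "'a list set \<Rightarrow> ('a list \<times> 'a list) set" where
  "childR N = {(t, s). s \<in> N \<and> t \<in> N \<and> (\<exists>a. t = s @ [a])}"

lemma wf_childR:
  assumes wo: "Well_order \<alpha>"
    and fdec: "\<And>s a. s\<in>N \<Longrightarrow> s@[a]\<in>N \<Longrightarrow> (f(s@[a]), f s)\<in>\<alpha> \<and> f(s@[a]) \<noteq> f s"
  shows "wf (childR N)"
proof -
  have "childR N \<subseteq> inv_image (\<alpha> - Id) f"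
    using fdec unfolding childR_def by auto
  then show ?thesis using wf_subset wf_inv_image wo_facts(5)[OF wo] by blast
qed

definition Bset :: "'b rel \<Rightarrow> 'a list set \<Rightarrow> ('a list \<Rightarrow> 'b) \<Rightarrow> 'a list \<Rightarrow> 'b set" where
  "Bset \<alpha> N g s = {\<beta>\<in>Field \<alpha>. \<forall>a. s@[a]\<in>N \<longrightarrow> (g(s@[a]),\<beta>)\<in>\<alpha> \<and> g(s@[a])\<noteq>\<beta>}"

lemma rank_exists:
  assumes wo: "Well_order \<alpha>"
    and fF: "\<And>s. s\<in>N \<Longrightarrow> f s \<in> Field \<alpha>"
    and fdec: "\<And>s a. s\<in>N \<Longrightarrow> s@[a]\<in>N \<Longrightarrow> (f(s@[a]), f s)\<in>\<alpha> \<and> f(s@[a]) \<noteq> f s"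
  shows "\<exists>r. \<forall>s\<in>N. r s \<in> Field \<alpha> \<and> (\<forall>a. s@[a]\<in>N \<longrightarrow> (r(s@[a]), r s)\<in>\<alpha> \<and> r(s@[a])\<noteq>r s)
     \<and> (\<forall>\<beta>\<in>Field \<alpha>. (\<forall>a. s@[a]\<in>N \<longrightarrow> (r(s@[a]),\<beta>)\<in>\<alpha> \<and> r(s@[a])\<noteq>\<beta>) \<longrightarrow> (r s,\<beta>)\<in>\<alpha>)"
proof -
  define F where "F = (\<lambda>g s. SOME \<beta>. \<beta> \<in> Bset \<alpha> N g s \<and> (\<forall>\<gamma>\<in>Bset \<alpha> N g s. (\<beta>,\<gamma>)\<in>\<alpha>))"
  define r where "r = wfrec (childR N) F"
  have wfR: "wf (childR N)" by (rule wf_childR[OF wo fdec])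
  have req: "r s = F r s" if "s \<in> N" for s
  proof -
    have "r s = F (cut r (childR N) s) s" unfolding r_def by (rule wfrec[OF wfR])
    moreover have "Bset \<alpha> N (cut r (childR N) s) s = Bset \<alpha> N r s"
      unfolding Bset_def using that by (auto simp: cut_apply childR_def)
    ultimately show ?thesis unfolding F_def by simp
  qed
  have main: "s \<in> N \<longrightarrow> r s \<in> Bset \<alpha> N r s \<and> (\<forall>\<gamma>\<in>Bset \<alpha> N r s. (r s,\<gamma>)\<in>\<alpha>) \<and> (r s, f s) \<in> \<alpha>" for s
  proof (induction s rule: wf_induct_rule[OF wfR])
    case (1 s)
    show ?case
    proof
      assume sN: "s \<in> N"
      have "f s \<in> Bset \<alpha> N r s"
        unfolding Bset_def
      proof (intro CollectI conjI allI impI)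
        show "f s \<in> Field \<alpha>" using fF sN .
        fix a assume aN: "s@[a] \<in> N"
        then have ch: "(s@[a], s) \<in> childR N" using sN unfolding childR_def by auto
        have ih: "(r (s@[a]), f (s@[a])) \<in> \<alpha>" using 1[OF ch] aN by blast
        have fd: "(f(s@[a]), f s)\<in>\<alpha>" "f(s@[a]) \<noteq> f s" using fdec[OF sN aN] by auto
        show "(r(s@[a]), f s) \<in> \<alpha>" using wo_facts(1)[OF wo] ih fd by (meson transD)
        show "r(s@[a]) \<noteq> f s"
        proof
          assume "r(s@[a]) = f s"
          then have "(f s, f (s@[a])) \<in> \<alpha>" using ih by simp
          then show False using fd wo_facts(2)[OF wo] by (meson antisymD)
        qed
      qed
      moreover have "Bset \<alpha> N r s \<subseteq> Field \<alpha>" unfolding Bset_def by auto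
      ultimately obtain \<beta> where "\<beta> \<in> Bset \<alpha> N r s \<and> (\<forall>\<gamma>\<in>Bset \<alpha> N r s. (\<beta>,\<gamma>)\<in>\<alpha>)"
        using wo_min[OF wo] by blast
      then have "F r s \<in> Bset \<alpha> N r s \<and> (\<forall>\<gamma>\<in>Bset \<alpha> N r s. (F r s,\<gamma>)\<in>\<alpha>)"
        unfolding F_def by (rule someI)
      with req[OF sN] \<open>f s \<in> Bset \<alpha> N r s\<close>
      show "r s \<in> Bset \<alpha> N r s \<and> (\<forall>\<gamma>\<in>Bset \<alpha> N r s. (r s,\<gamma>)\<in>\<alpha>) \<and> (r s, f s) \<in> \<alpha>"
        by auto
    qed
  qed
  show ?thesis
  proof (intro exI[of _ r] ballI)
    fix s assume sN: "s \<in> N"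
    from main[of s] sN have m: "r s \<in> Bset \<alpha> N r s" "\<forall>\<gamma>\<in>Bset \<alpha> N r s. (r s,\<gamma>)\<in>\<alpha>" by auto
    have "r s \<in> Field \<alpha>" using m unfolding Bset_def by auto
    moreover have "\<forall>a. s@[a]\<in>N \<longrightarrow> (r(s@[a]), r s)\<in>\<alpha> \<and> r(s@[a])\<noteq>r s" using m unfolding Bset_def by auto
    moreover have "\<forall>\<beta>\<in>Field \<alpha>. (\<forall>a. s@[a]\<in>N \<longrightarrow> (r(s@[a]),\<beta>)\<in>\<alpha> \<and> r(s@[a])\<noteq>\<beta>) \<longrightarrow> (r s,\<beta>)\<in>\<alpha>"
      using m(2) unfolding Bset_def by auto
    ultimately show "r s \<in> Field \<alpha> \<and> (\<forall>a. s@[a]\<in>N \<longrightarrow> (r(s@[a]), r s)\<in>\<alpha> \<and> r(s@[a])\<noteq>r s)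
     \<and> (\<forall>\<beta>\<in>Field \<alpha>. (\<forall>a. s@[a]\<in>N \<longrightarrow> (r(s@[a]),\<beta>)\<in>\<alpha> \<and> r(s@[a])\<noteq>\<beta>) \<longrightarrow> (r s,\<beta>)\<in>\<alpha>)" by blast
  qed
qed

lemma rank_lower:
  assumes wo: "Well_order \<alpha>" and wfR: "wf (childR N)"
    and rF: "\<And>s. s\<in>N \<Longrightarrow> r s \<in> Field \<alpha>"
    and rdec: "\<And>s a. s\<in>N \<Longrightarrow> s@[a]\<in>N \<Longrightarrow> (r(s@[a]), r s)\<in>\<alpha> \<and> r(s@[a]) \<noteq> r s"
    and SN: "S \<subseteq> N"
    and LF: "\<And>s. s\<in>S \<Longrightarrow> L s \<in> Field \<alpha>"
    and Lstep: "\<And>s \<gamma>. s\<in>S \<Longrightarrow> (\<gamma>, L s)\<in>\<alpha> \<Longrightarrow> \<gamma> \<noteq> L s \<Longrightarrow> \<exists>a. s@[a]\<in>S \<and> (\<gamma>, L(s@[a]))\<in>\<alpha>"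
  shows "s \<in> S \<Longrightarrow> (L s, r s) \<in> \<alpha>"
proof (induction s rule: wf_induct_rule[OF wfR])
  case (1 s)
  show ?case
  proof (rule ccontr)
    assume nle: "(L s, r s) \<notin> \<alpha>"
    have sN: "s \<in> N" using 1 SN by auto
    have lt: "(r s, L s) \<in> \<alpha>" "r s \<noteq> L s"
      using wo_facts(4)[OF wo, OF rF[OF sN] LF[OF 1(2)]] nle wo_facts(3)[OF wo] LF[OF 1(2)] by auto
    obtain a where a: "s@[a] \<in> S" "(r s, L(s@[a]))\<in>\<alpha>" using Lstep[OF 1(2) lt] by blast
    have ch: "(s@[a], s) \<in> childR N" using a SN sN unfolding childR_def by auto
    have ih: "(L(s@[a]), r(s@[a])) \<in> \<alpha>" using 1(1)[OF ch a(1)] .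
    have rd: "(r(s@[a]), r s)\<in>\<alpha>" "r(s@[a]) \<noteq> r s" using rdec[OF sN] a SN by auto
    have "(r s, r (s@[a])) \<in> \<alpha>" using a(2) ih wo_facts(1)[OF wo] by (meson transD)
    then show False using rd wo_facts(2)[OF wo] by (meson antisymD)
  qed
qed



definition AC :: "nat \<Rightarrow> nat list list set" where
  "AC k = {s. (\<forall>x\<in>set s. length x = k) \<and> sorted_wrt (incomparable omega_prod_le) s}"

definition cidx :: "nat list \<Rightarrow> nat list \<Rightarrow> nat" where
  "cidx a x = (LEAST i. i < length a \<and> x!i < a!i)"

definition delc :: "nat \<Rightarrow> nat list \<Rightarrow> nat list" where
  "delc i x = take i x @ drop (Suc i) x"

definition slice :: "nat list \<Rightarrow> nat \<times> nat \<Rightarrow> nat list list \<Rightarrow> nat list list" where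
  "slice a q s = map (delc (fst q)) (filter (\<lambda>x. cidx a x = fst q \<and> x ! fst q = snd q) s)"

definition Pset :: "nat list \<Rightarrow> (nat \<times> nat) set" where
  "Pset a = Sigma {..<length a} (\<lambda>i. {..<a!i})"

fun H :: "nat \<Rightarrow> nat list list \<Rightarrow> nat list" where
  "H 0 s = (if s = [] then [1] else [0])"
| "H (Suc m) [] = 1 # replicate (Suc m) 0"
| "H (Suc m) (a # s) = 0 # map (\<lambda>j. \<Sum>q\<in>Pset a. H m (slice a q s) ! j) [0..<Suc m]"

lemma length_H: "length (H m s) = Suc m"
  by (cases "(m,s)" rule: H.cases) auto

lemma H_nonempty: "s \<noteq> [] \<Longrightarrow> H m s = 0 # tl (H m s)"
  by (cases "(m,s)" rule: H.cases) auto

lemma finite_Pset: "finite (Pset a)"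
  unfolding Pset_def by auto

lemma delc_le:
  assumes "length x = k" "length y = k" "i < k" "x!i = y!i"
  shows "omega_prod_le (delc i x) (delc i y) \<longleftrightarrow> omega_prod_le x y"
proof -
  have x: "x = take i x @ x!i # drop (Suc i) x" using assms(1,3) id_take_nth_drop by metis
  have y: "y = take i y @ y!i # drop (Suc i) y" using assms(2,3) id_take_nth_drop by metis
  have "omega_prod_le x y \<longleftrightarrow> list_all2 (\<le>) (take i x @ x!i # drop (Suc i) x) (take i y @ y!i # drop (Suc i) y)"
    unfolding omega_prod_le_def using x y by simp
  also have "\<dots> \<longleftrightarrow> list_all2 (\<le>) (take i x) (take i y) \<and> list_all2 (\<le>) (drop (Suc i) x) (drop (Suc i) y)"
    using assms by (simp add: list_all2_append)
  also have "\<dots> \<longleftrightarrow> omega_prod_le (delc i x) (delc i y)"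
    unfolding omega_prod_le_def delc_def using assms by (simp add: list_all2_append)
  finally show ?thesis by simp
qed

lemma length_delc: "i < length x \<Longrightarrow> length (delc i x) = length x - 1"
  unfolding delc_def by simp

lemma slice_AC:
  assumes "s \<in> AC (Suc k)" "q \<in> Pset a" "length a = Suc k"
  shows "slice a q s \<in> AC k"
proof -
  obtain i v where q: "q = (i,v)" "i < Suc k" using assms(2,3) unfolding Pset_def by auto
  let ?P = "\<lambda>x. cidx a x = i \<and> x ! i = v"
  have f: "filter ?P s \<in> AC (Suc k)" using assms(1) unfolding AC_def by (auto simp: sorted_wrt_filter)
  have "sorted_wrt (incomparable omega_prod_le) (filter ?P s)" using f unfolding AC_def by auto
  then have "sorted_wrt (\<lambda>x y. incomparable omega_prod_le (delc i x) (delc i y)) (filter ?P s)"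
  proof (rule sorted_wrt_mono_rel[rotated])
    fix x y assume "x \<in> set (filter ?P s)" "y \<in> set (filter ?P s)" "incomparable omega_prod_le x y"
    with f q show "incomparable omega_prod_le (delc i x) (delc i y)"
      unfolding incomparable_def AC_def using delc_le[of x "Suc k" y i] delc_le[of y "Suc k" x i] by auto
  qed
  then show ?thesis using f q unfolding AC_def slice_def
    by (auto simp: sorted_wrt_map length_delc)
qed

lemma comparable_1:
  assumes "length x = 1" "length y = 1"
  shows "omega_prod_le x y \<or> omega_prod_le y x"
  using assms unfolding omega_prod_le_def
  by (cases x; cases y) auto

lemma not_le_ex:
  assumes "length a = length y" "\<not> omega_prod_le a y"
  shows "\<exists>i<length a. y!i < a!i"
  using assms unfolding omega_prod_le_def list_all2_conv_all_nth by (auto simp: not_le)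

lemma sum_lex:
  fixes g g' :: "'q \<Rightarrow> nat list"
  assumes fin: "finite P" and q0: "q0 \<in> P"
    and len: "\<And>q. length (g q) = k" "\<And>q. length (g' q) = k"
    and same: "\<And>q. q \<noteq> q0 \<Longrightarrow> g' q = g q"
    and lt: "(g' q0, g q0) \<in> lexord {(a,b). a < b}"
  shows "(map (\<lambda>j. \<Sum>q\<in>P. g' q ! j) [0..<k], map (\<lambda>j. \<Sum>q\<in>P. g q ! j) [0..<k]) \<in> lexord {(a,b). a < b}"
proof -
  from lt obtain p where p: "p < k" "take p (g' q0) = take p (g q0)" "g' q0 ! p < g q0 ! p"
    unfolding lexord_take_index_conv using len by auto
  have eqj: "g' q ! j = g q ! j" if "j < p" for q j
  proof (cases "q = q0")
    case True
    have "take p (g' q0) ! j = take p (g q0) ! j" using p by simp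
    then show ?thesis using True that by simp
  qed (simp add: same)
  have t: "take p (map (\<lambda>j. \<Sum>q\<in>P. g' q ! j) [0..<k]) = take p (map (\<lambda>j. \<Sum>q\<in>P. g q ! j) [0..<k])"
    using p(1) by (simp add: take_map eqj)
  have s: "(\<Sum>q\<in>P. g' q ! p) < (\<Sum>q\<in>P. g q ! p)"
  proof (rule sum_strict_mono_ex1[OF fin])
    show "\<forall>q\<in>P. g' q ! p \<le> g q ! p" using same by (metis order.refl p(3) less_imp_le)
    show "\<exists>q\<in>P. g' q ! p < g q ! p" using q0 p(3) by blast
  qed
  show ?thesis unfolding lexord_take_index_conv
    using p(1) t s by auto
qed

lemma slice_snoc:
  "slice a q (t @ [y]) = (if q = (cidx a y, y ! cidx a y) then slice a q t @ [delc (fst q) y] else slice a q t)"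
  unfolding slice_def by (cases q) auto

lemma decH: "t @ [y] \<in> AC (Suc m) \<Longrightarrow> (H m (t@[y]), H m t) \<in> lexord {(a,b). a < b}"
proof (induction m arbitrary: t y)
  case 0
  show ?case
  proof (cases t)
    case (Cons b t')
    have "incomparable omega_prod_le b y" "length b = 1" "length y = 1"
      using 0 Cons unfolding AC_def by auto
    then show ?thesis using comparable_1[of b y] unfolding incomparable_def by auto
  qed simp
next
  case (Suc m)
  show ?case
  proof (cases t)
    case (Cons a t')
    have inc: "incomparable omega_prod_le a y" and la: "length a = Suc (Suc m)" and ly: "length y = Suc (Suc m)"
      using Suc.prems Cons unfolding AC_def by auto
    have t'AC: "t' @ [y] \<in> AC (Suc (Suc m))" using Suc.prems Cons unfolding AC_def by auto
    have "\<exists>i. i < length a \<and> y!i < a!i" using not_le_ex[of a y] inc la ly unfolding incomparable_def by auto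
    then have ci: "cidx a y < length a \<and> y ! cidx a y < a ! cidx a y"
      unfolding cidx_def by (rule LeastI_ex)
    define q0 where "q0 = (cidx a y, y ! cidx a y)"
    have q0P: "q0 \<in> Pset a" using ci unfolding q0_def Pset_def by auto
    have sl: "slice a q0 t' @ [delc (fst q0) y] \<in> AC (Suc m)"
      using slice_AC[OF t'AC q0P la] slice_snoc[of a q0 t' y] unfolding q0_def by simp
    have ih: "(H m (slice a q0 (t'@[y])), H m (slice a q0 t')) \<in> lexord {(a,b). a < b}"
      using Suc.IH[OF sl] slice_snoc[of a q0 t' y] unfolding q0_def by simp
    have "(map (\<lambda>j. \<Sum>q\<in>Pset a. H m (slice a q (t'@[y])) ! j) [0..<Suc m],
           map (\<lambda>j. \<Sum>q\<in>Pset a. H m (slice a q t') ! j) [0..<Suc m]) \<in> lexord {(a,b). a < b}"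
    proof (rule sum_lex[OF finite_Pset q0P])
      show "\<And>q. length (H m (slice a q t')) = Suc m" "\<And>q. length (H m (slice a q (t'@[y]))) = Suc m"
        by (simp_all add: length_H)
      show "\<And>q. q \<noteq> q0 \<Longrightarrow> H m (slice a q (t'@[y])) = H m (slice a q t')"
        using slice_snoc unfolding q0_def by simp
      show "(H m (slice a q0 (t'@[y])), H m (slice a q0 t')) \<in> lexord {(a,b). a < b}" by (rule ih)
    qed
    then show ?thesis using Cons by simp
  qed simp
qed



lemma N_AC: "s \<in> antichain_seqs (omega_prod_carrier n) omega_prod_le \<longleftrightarrow> s \<noteq> [] \<and> s \<in> AC n"
  unfolding antichain_seqs_def AC_def omega_prod_carrier_def sorted_wrt_iff_nth_less by auto

lemma nolex: "list_all2 (\<le>) u w \<Longrightarrow> (w, u) \<notin> lexord {(a::nat,b). a < b}"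
proof (induction u arbitrary: w)
  case Nil then show ?case by simp
next
  case (Cons x u)
  then obtain y w' where "w = y # w'" "x \<le> y" "list_all2 (\<le>) u w'" by (cases w) auto
  with Cons.IH show ?case by auto
qed

definition Sset :: "nat \<Rightarrow> nat list list set" where
  "Sset n = {s. s \<noteq> [] \<and> (\<forall>k<length s. length (s!k) = n \<and> hd (s!k) = k) \<and>
      sorted_wrt (\<lambda>x y. (tl y, tl x) \<in> lexord {(a,b). a<b}) s}"

lemma Sset_AC:
  assumes "s \<in> Sset (Suc m)" shows "s \<in> AC (Suc m)"
proof -
  have len: "\<forall>x\<in>set s. length x = Suc m" using assms unfolding Sset_def by (auto simp: in_set_conv_nth)
  have "sorted_wrt (incomparable omega_prod_le) s"
    unfolding sorted_wrt_iff_nth_less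
  proof (intro allI impI)
    fix i j assume ij0: "i < j" "j < length s"
    then have ij: "i < j \<and> j < length s" by simp
    let ?x = "s!i" and ?y = "s!j"
    have lx: "length ?x = Suc m" "hd ?x = i" "length ?y = Suc m" "hd ?y = j"
      using assms ij unfolding Sset_def by auto
    have lt: "(tl ?y, tl ?x) \<in> lexord {(a,b). a<b}"
      using assms ij unfolding Sset_def sorted_wrt_iff_nth_less by auto
    have x: "?x = i # tl ?x" using lx by (cases ?x) auto
    have y: "?y = j # tl ?y" using lx by (cases ?y) auto
    have "\<not> omega_prod_le ?x ?y"
    proof
      assume "omega_prod_le ?x ?y"
      then have "list_all2 (\<le>) (i # tl ?x) (j # tl ?y)" unfolding omega_prod_le_def using x y by metis
      then have "list_all2 (\<le>) (tl ?x) (tl ?y)" by simp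
      then show False using nolex lt by blast
    qed
    moreover have "\<not> omega_prod_le ?y ?x"
    proof
      assume "omega_prod_le ?y ?x"
      then have "list_all2 (\<le>) (j # tl ?y) (i # tl ?x)" unfolding omega_prod_le_def using x y by metis
      then show False using ij by simp
    qed
    ultimately show "incomparable omega_prod_le ?x ?y" unfolding incomparable_def by simp
  qed
  then show ?thesis using len unfolding AC_def by simp
qed

lemma Sset_step:
  assumes s: "s \<in> Sset (Suc m)" and g: "(\<gamma>, tl (last s)) \<in> lexord {(a,b). a<b}" "length \<gamma> = m"
  shows "s @ [length s # \<gamma>] \<in> Sset (Suc m)"
proof -
  have ne: "s \<noteq> []" and s1: "\<forall>k<length s. length (s!k) = Suc m \<and> hd (s!k) = k"
     and s2: "sorted_wrt (\<lambda>x y. (tl y, tl x) \<in> lexord {(a,b). a<b}) s"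
    using s unfolding Sset_def mem_Collect_eq by (blast, blast, blast)
  have all: "(\<gamma>, tl x) \<in> lexord {(a,b). a<b}" if xs: "x \<in> set s" for x
  proof -
    obtain k where k0: "k < length s" "s!k = x" using xs[unfolded in_set_conv_nth] by blast
    then have k: "k < length s" "x = s!k" by simp_all
    have ls: "last s = s ! (length s - 1)" using ne by (simp add: last_conv_nth)
    show ?thesis
    proof (cases "k = length s - 1")
      case True
      then have "x = last s" using k ls by simp
      then show ?thesis using g by simp
    next
      case False
      then have kl: "k < length s - 1" "length s - 1 < length s" using k ne by auto
      from s2 have "(tl (s!(length s - 1)), tl (s!k)) \<in> lexord {(a,b). a<b}"
        unfolding sorted_wrt_iff_nth_less using kl by blast
      then have "(tl (last s), tl x) \<in> lexord {(a,b). a<b}" using ls k by simp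
      then show ?thesis by (rule lexord_trans[OF g(1) _ lexord_less_trans])
    qed
  qed
  have "\<forall>k<length (s @ [length s # \<gamma>]). length ((s @ [length s # \<gamma>])!k) = Suc m \<and> hd ((s @ [length s # \<gamma>])!k) = k"
  proof (intro allI impI)
    fix k assume "k < length (s @ [length s # \<gamma>])"
    then consider "k < length s" | "k = length s" by fastforce
    then show "length ((s @ [length s # \<gamma>])!k) = Suc m \<and> hd ((s @ [length s # \<gamma>])!k) = k"
      by cases (use s1 g in \<open>simp_all add: nth_append\<close>)
  qed
  moreover have "sorted_wrt (\<lambda>x y. (tl y, tl x) \<in> lexord {(a,b). a<b}) (s @ [length s # \<gamma>])"
    using s2 all by (simp add: sorted_wrt_append)
  ultimately show ?thesis unfolding Sset_def by simp
qed

theorem main_result: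
  fixes n :: nat
  assumes "n \<ge> 1"
  shows "is_width (omega_prod_carrier n) omega_prod_le (omega_pow (n - 1))"
proof -
  obtain m where n: "n = Suc m" using assms by (cases n) auto
  then have m: "n - 1 = m" by simp
  let ?N = "antichain_seqs (omega_prod_carrier n) omega_prod_le"
  let ?\<alpha> = "omega_pow m"
  define f where "f s = tl (H m s)" for s
  have wo: "Well_order ?\<alpha>" by (rule Well_order_omega_pow)
  have fF: "f s \<in> Field ?\<alpha>" for s
    unfolding f_def Field_omega_pow by (simp add: length_H)
  have fdec: "(f(s@[a]), f s) \<in> ?\<alpha> \<and> f(s@[a]) \<noteq> f s" if "s \<in> ?N" "s@[a] \<in> ?N" for s a
  proof -
    have "(H m (s@[a]), H m s) \<in> lexord {(a,b). a<b}"
      using decH that n N_AC by blast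
    moreover have "H m (s@[a]) = 0 # f (s@[a])" "H m s = 0 # f s"
      using H_nonempty that N_AC unfolding f_def by blast+
    ultimately have lt: "(f (s@[a]), f s) \<in> lexord {(a,b). a<b}" by simp
    moreover have "f (s@[a]) \<noteq> f s" using lt lexord_irreflexive[of "{(a::nat,b). a<b}"] by auto
    ultimately show ?thesis unfolding omega_pow_def f_def by (simp add: length_H)
  qed
  obtain r where r: "\<forall>s\<in>?N. r s \<in> Field ?\<alpha> \<and> (\<forall>a. s@[a]\<in>?N \<longrightarrow> (r(s@[a]), r s)\<in>?\<alpha> \<and> r(s@[a])\<noteq>r s)
     \<and> (\<forall>\<beta>\<in>Field ?\<alpha>. (\<forall>a. s@[a]\<in>?N \<longrightarrow> (r(s@[a]),\<beta>)\<in>?\<alpha> \<and> r(s@[a])\<noteq>\<beta>) \<longrightarrow> (r s,\<beta>)\<in>?\<alpha>)"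
    using rank_exists[OF wo fF fdec] by blast
  have wfR: "wf (childR ?N)" by (rule wf_childR[OF wo fdec])
  have SN: "Sset n \<subseteq> ?N"
  proof
    fix s assume "s \<in> Sset n"
    moreover then have "s \<noteq> []" unfolding Sset_def by simp
    ultimately show "s \<in> ?N" using Sset_AC[of s m] n N_AC by simp
  qed
  have low: "(tl (last s), r s) \<in> ?\<alpha>" if "s \<in> Sset n" for s
  proof (rule rank_lower[OF wo wfR _ _ SN, where L = "\<lambda>s. tl (last s)"])
    show "\<And>s. s \<in> ?N \<Longrightarrow> r s \<in> Field ?\<alpha>" using r by blast
    show "\<And>s a. s \<in> ?N \<Longrightarrow> s@[a] \<in> ?N \<Longrightarrow> (r(s@[a]), r s)\<in>?\<alpha> \<and> r(s@[a]) \<noteq> r s" using r by blast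
    show "\<And>s. s \<in> Sset n \<Longrightarrow> tl (last s) \<in> Field ?\<alpha>"
    proof -
      fix s assume s: "s \<in> Sset n"
      then have "s \<noteq> []" "length (s ! (length s - 1)) = n" unfolding Sset_def by auto
      then show "tl (last s) \<in> Field ?\<alpha>" unfolding Field_omega_pow using n by (simp add: last_conv_nth)
    qed
    show "\<exists>a. s@[a] \<in> Sset n \<and> (\<gamma>, tl (last (s@[a]))) \<in> ?\<alpha>"
      if "s \<in> Sset n" "(\<gamma>, tl (last s)) \<in> ?\<alpha>" "\<gamma> \<noteq> tl (last s)" for s \<gamma>
    proof -
      have g: "(\<gamma>, tl (last s)) \<in> lexord {(a,b). a<b}" "length \<gamma> = m"
        using that unfolding omega_pow_def by auto
      show ?thesis
        using Sset_step[of s m \<gamma>] that g n unfolding omega_pow_def by auto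
    qed
    show "s \<in> Sset n" by (rule that)
  qed
  have Feq: "Field ?\<alpha> = {\<beta>. \<exists>s\<in>?N. (\<beta>, r s) \<in> ?\<alpha>}"
  proof
    show "{\<beta>. \<exists>s\<in>?N. (\<beta>, r s) \<in> ?\<alpha>} \<subseteq> Field ?\<alpha>" by (auto intro: FieldI1)
    show "Field ?\<alpha> \<subseteq> {\<beta>. \<exists>s\<in>?N. (\<beta>, r s) \<in> ?\<alpha>}"
    proof
      fix \<beta> assume "\<beta> \<in> Field ?\<alpha>"
      then have lb: "length \<beta> = m" unfolding Field_omega_pow by simp
      have s0: "[0 # \<beta>] \<in> Sset n" unfolding Sset_def using lb n by simp
      then show "\<beta> \<in> {\<beta>. \<exists>s\<in>?N. (\<beta>, r s) \<in> ?\<alpha>}" using low[OF s0] SN by auto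
    qed
  qed
  show ?thesis unfolding is_width_def m using wo r Feq by blast
qed


theorem mainTheorem6:
  fixes n :: nat
  assumes "n \<ge> 1"
  shows "is_width (omega_prod_carrier n) omega_prod_le (omega_pow (n - 1))"
  using assms by (rule main_result)

end
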